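(* Let $\mu$ be a partition with at most $n$ parts and let $T_\mu$ be the tableau of shape $\mu$ whose cells in the $k$-th row are all filled with the number $k$. Then $T_\mu$ is a semistandard C-tableau and $T_\mu\cdot\emptyset=\mu$. Conversely, if $J$ is a semistandard C-tableau of shape $\mu$ such that $J\cdot\emptyset$ is defined and equals a partition $\lambda$, then $\lambda=\mu$ and $J=T_\mu$. Moreover, if $\mu\neq\emptyset$, then every intermediate diagram occurring during the computation of $T_\mu\cdot\emptyset$ (after the first step) is nonempty.
   Context: Fix $n\ge1$ and the ordered alphabet $1<2<\cdots<n<\bar n<\cdots<\bar 1$, where $\bar k := 2n+1-k$ for $1\le k\le n$. For a column $J$ (a strictly increasing sequence of letters) and a letter $a\in J$, $\mathrm{pos}_J(a)$ is the position of $a$ in $J$ counted from the top, and $|J|$ is the length of $J$. A semistandard C-tableau of shape $\mu$ (a Young diagram with at most $n$ rows) is a filling of $\mu$ by letters with rows weakly increasing and columns strictly increasing, such that: (C-1) for every column $J$ and every $k\le n$ with $k,\bar k\in J$, $\mathrm{pos}_J(k)+(|J|+1-\mathrm{pos}_J(\bar k))\le k$; (C-2) for every pair of adjacent columns $L$ (left), $R$ (right) and every $1\le a\le b\le n$ with $a\in L$, $\bar a\in R$, $b,\bar b\in L\cup R$, if either $\mathrm{pos}_L(a)\le\mathrm{pos}_R(b)<\mathrm{pos}_R(\bar b)\le\mathrm{pos}_R(\bar a)$ or $\mathrm{pos}_L(a)\le\mathrm{pos}_L(b)<\mathrm{pos}_L(\bar b)\le\mathrm{pos}_R(\bar a)$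 (an $(a,b)$-configuration), then $\mathrm{pos}(b)-\mathrm{pos}(a)+\mathrm{pos}(\bar a)-\mathrm{pos}(\bar b)<b-a$. These tableaux form the crystal basis of the irreducible $Sp(2n,\mathbb{R})$-representation $V_\mu$. Action of a tableau $J$ on a partition $\lambda$ (at most $n$ parts): read the columns of $J$ from the rightmost to the leftmost, each column from top to bottom; a letter $k\le n$ adds one cell to row $k$, a letter $\bar k$ removes one cell from row $k$; if at any step the result is not a Young diagram (partition with at most $n$ rows), the action is undefined. If all steps succeed with final diagram $\nu$, we write $J\cdot\lambda=\nu$. $\emptyset$ denotes the empty partition (trivial representation). *)

theory Defs
  imports Main
begin

text \<open>Letters: natural numbers 1..2n; the letter k (k \<le> n) is unbarred and
  bar k = 2n+1-k. A partition with at most n parts is a weakly decreasing list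
  of length n (trailing zeros allowed). A tableau is a list of columns
  (left to right), each column a list of letters from top to bottom.\<close>

definition bar :: "nat \<Rightarrow> nat \<Rightarrow> nat" where
  "bar n k = 2 * n + 1 - k"

definition is_letter :: "nat \<Rightarrow> nat \<Rightarrow> bool" where
  "is_letter n x \<longleftrightarrow> 1 \<le> x \<and> x \<le> 2 * n"

definition is_partition :: "nat \<Rightarrow> nat list \<Rightarrow> bool" where
  "is_partition n l \<longleftrightarrow> length l = n \<and> sorted_wrt (\<ge>) l"

definition empty_part :: "nat \<Rightarrow> nat list" where
  "empty_part n = replicate n 0"

text \<open>Length of the j-th column (0-indexed) of the Young diagram of mu.\<close>
definition col_len :: "nat list \<Rightarrow> nat \<Rightarrow> nat" where
  "col_len mu j = length (filter (\<lambda>p. j < p) mu)"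

text \<open>Position (1-based, from the top) of a letter a in column J.\<close>
definition pos :: "nat list \<Rightarrow> nat \<Rightarrow> nat" where
  "pos J a = Suc (LEAST i. i < length J \<and> J ! i = a)"

definition is_tableau_of_shape :: "nat \<Rightarrow> nat list \<Rightarrow> nat list list \<Rightarrow> bool" where
  "is_tableau_of_shape n mu T \<longleftrightarrow>
     length T = (if mu = [] then 0 else hd mu) \<and>
     (\<forall>j < length T. length (T ! j) = col_len mu j) \<and>
     (\<forall>J \<in> set T. \<forall>x \<in> set J. is_letter n x)"

definition semistandard :: "nat \<Rightarrow> nat list \<Rightarrow> nat list list \<Rightarrow> bool" where
  "semistandard n mu T \<longleftrightarrow>
     is_tableau_of_shape n mu T \<and>
     (\<forall>J \<in> set T. sorted_wrt (<) J) \<and>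
     (\<forall>j i. Suc j < length T \<and> i < length (T ! Suc j) \<longrightarrow> T ! j ! i \<le> T ! Suc j ! i)"

definition C1 :: "nat \<Rightarrow> nat list \<Rightarrow> bool" where
  "C1 n J \<longleftrightarrow> (\<forall>k. 1 \<le> k \<and> k \<le> n \<and> k \<in> set J \<and> bar n k \<in> set J \<longrightarrow>
      int (pos J k) + (int (length J) + 1 - int (pos J (bar n k))) \<le> int k)"

definition C2 :: "nat \<Rightarrow> nat list \<Rightarrow> nat list \<Rightarrow> bool" where
  "C2 n L R \<longleftrightarrow> (\<forall>a b. 1 \<le> a \<and> a \<le> b \<and> b \<le> n \<and> a \<in> set L \<and> bar n a \<in> set R \<longrightarrow>
      ((b \<in> set R \<and> bar n b \<in> set R \<and>
        pos L a \<le> pos R b \<and> pos R b < pos R (bar n b) \<and> pos R (bar n b) \<le> pos R (bar n a)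
        \<longrightarrow> int (pos R b) - int (pos L a) + int (pos R (bar n a)) - int (pos R (bar n b)) < int b - int a)
      \<and>
      (b \<in> set L \<and> bar n b \<in> set L \<and>
        pos L a \<le> pos L b \<and> pos L b < pos L (bar n b) \<and> pos L (bar n b) \<le> pos R (bar n a)
        \<longrightarrow> int (pos L b) - int (pos L a) + int (pos R (bar n a)) - int (pos L (bar n b)) < int b - int a)))"

definition semistandard_C :: "nat \<Rightarrow> nat list \<Rightarrow> nat list list \<Rightarrow> bool" where
  "semistandard_C n mu T \<longleftrightarrow>
     semistandard n mu T \<and> (\<forall>J \<in> set T. C1 n J) \<and>
     (\<forall>j. Suc j < length T \<longrightarrow> C2 n (T ! j) (T ! Suc j))"

text \<open>The tableau T_mu: the k-th row filled with k, i.e. column j is [1,...,col_len mu j].\<close>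
definition T_mu :: "nat list \<Rightarrow> nat list list" where
  "T_mu mu = map (\<lambda>j. [1..<Suc (col_len mu j)]) [0..<(if mu = [] then 0 else hd mu)]"

text \<open>Action of one letter on a partition (None = undefined).\<close>
definition act_letter :: "nat \<Rightarrow> nat \<Rightarrow> nat list \<Rightarrow> nat list option" where
  "act_letter n x lam =
     (if 1 \<le> x \<and> x \<le> n then
        (let lam' = lam[x - 1 := lam ! (x - 1) + 1] in
         if is_partition n lam' then Some lam' else None)
      else if n < x \<and> x \<le> 2 * n then
        (let k = bar n x in
         if lam ! (k - 1) = 0 then None else
         (let lam' = lam[k - 1 := lam ! (k - 1) - 1] in
          if is_partition n lam' then Some lam' else None))
      else None)"

definition reading_word :: "nat list list \<Rightarrow> nat list" where
  "reading_word T = concat (rev T)"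

definition act_word :: "nat \<Rightarrow> nat list \<Rightarrow> nat list \<Rightarrow> nat list option" where
  "act_word n w lam = fold (\<lambda>x acc. Option.bind acc (act_letter n x)) w (Some lam)"

definition act :: "nat \<Rightarrow> nat list list \<Rightarrow> nat list \<Rightarrow> nat list option" where
  "act n T lam = act_word n (reading_word T) lam"

end

theory Submission
  imports Defs
begin

lemma col_len_le: "col_len mu k \<le> length mu"
  unfolding col_len_def by simp

lemma col_len_iff:
  assumes "sorted_wrt (\<ge>) mu" "r < length mu"
  shows "r < col_len mu k \<longleftrightarrow> k < mu ! r"
  using assms
proof (induction mu arbitrary: r)
  case Nil then show ?case by simp
next
  case (Cons a l)
  have cl: "col_len (a # l) k = (if k < a then 1 else 0) + col_len l k"
    unfolding col_len_def by simp
  have sl: "sorted_wrt (\<ge>) l" and al: "\<forall>x\<in>set l. x \<le> a" using Cons.prems(1) by auto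
  have z: "col_len l k = 0" if "\<not> k < a"
  proof -
    have "filter (\<lambda>p. k < p) l = []" using al that by (force simp: filter_empty_conv)
    then show ?thesis unfolding col_len_def by simp
  qed
  show ?case
  proof (cases r)
    case 0 then show ?thesis using cl z by simp
  next
    case (Suc r')
    have r': "r' < length l" using Cons.prems(2) Suc by simp
    have ih: "r' < col_len l k \<longleftrightarrow> k < l ! r'" using Cons.IH[OF sl r'] .
    have "l ! r' \<le> a" using al r' by simp
    then show ?thesis using cl z ih Suc by (cases "k < a") simp_all
  qed
qed

lemma col_len_mono:
  assumes "sorted_wrt (\<ge>) mu"
  shows "col_len mu (Suc j) \<le> col_len mu j"
proof (rule ccontr)
  assume "\<not> ?thesis"
  then have a: "col_len mu j < col_len mu (Suc j)" by simp
  moreover have "col_len mu (Suc j) \<le> length mu" by (rule col_len_le)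
  ultimately have r: "col_len mu j < length mu" by simp
  have "Suc j < mu ! col_len mu j" using col_len_iff[OF assms r, of "Suc j"] a by simp
  then have "col_len mu j < col_len mu j" using col_len_iff[OF assms r, of j] by simp
  then show False by simp
qed

lemma act_word_None: "fold (\<lambda>x acc. Option.bind acc (act_letter n x)) w None = None"
  by (induction w) auto

lemma act_word_Nil[simp]: "act_word n [] lam = Some lam"
  unfolding act_word_def by simp

lemma act_word_append:
  "act_word n (w1 @ w2) lam = Option.bind (act_word n w1 lam) (act_word n w2)"
proof (cases "act_word n w1 lam")
  case None then show ?thesis unfolding act_word_def by (simp add: act_word_None)
next
  case (Some a) then show ?thesis unfolding act_word_def by simp
qed

lemma act_word_snoc:
  "act_word n (w @ [x]) lam = Option.bind (act_word n w lam) (act_letter n x)"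
  by (simp add: act_word_append act_word_def split: option.splits)

lemma act_word_prefix:
  "act_word n (w1 @ w2) lam \<noteq> None \<Longrightarrow> act_word n w1 lam \<noteq> None"
  by (cases "act_word n w1 lam") (auto simp: act_word_append)

definition S :: "nat list \<Rightarrow> nat \<Rightarrow> nat \<Rightarrow> nat list" where
  "S mu j i = map (\<lambda>r. mu ! r - Suc j + (if r < i then 1 else 0)) [0..<length mu]"

definition P :: "nat list \<Rightarrow> nat \<Rightarrow> nat list" where
  "P mu j = map (\<lambda>p. p - j) mu"

lemma S0: "S mu j 0 = P mu (Suc j)"
  unfolding S_def P_def by (rule nth_equalityI) auto

lemma Sc: assumes "sorted_wrt (\<ge>) mu" shows "S mu j (col_len mu j) = P mu j"
  unfolding S_def P_def
proof (rule nth_equalityI)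
  fix r assume "r < length (map (\<lambda>r. mu ! r - Suc j + (if r < col_len mu j then 1 else 0)) [0..<length mu])"
  then have r: "r < length mu" by simp
  show "map (\<lambda>r. mu ! r - Suc j + (if r < col_len mu j then 1 else 0)) [0..<length mu] ! r = map (\<lambda>p. p - j) mu ! r"
    using col_len_iff[OF assms r, of j] r by auto
qed simp

lemma S_part:
  assumes "is_partition n mu" shows "is_partition n (S mu j i)"
proof -
  have "mu ! b - Suc j + (if b < i then 1 else 0) \<le> mu ! a - Suc j + (if a < i then 1 else 0)"
    if "a < b" "b < length mu" for a b
  proof -
    have "mu ! b \<le> mu ! a" using assms that unfolding is_partition_def
      by (auto simp: sorted_wrt_iff_nth_less)
    then show ?thesis using that by auto
  qed
  then show ?thesis using assms unfolding is_partition_def S_def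
    by (auto simp: sorted_wrt_iff_nth_less)
qed

lemma P_part:
  assumes "is_partition n mu" shows "is_partition n (P mu j)"
  using assms unfolding is_partition_def P_def
  by (auto simp: sorted_wrt_map elim!: sorted_wrt_mono_rel[rotated])

lemma S_step:
  assumes "is_partition n mu" "i < n"
  shows "act_letter n (Suc i) (S mu j i) = Some (S mu j (Suc i))"
proof -
  have l: "length mu = n" using assms unfolding is_partition_def by simp
  have eq: "(S mu j i)[Suc i - 1 := S mu j i ! (Suc i - 1) + 1] = S mu j (Suc i)"
    unfolding S_def using assms l by (intro nth_equalityI) (auto simp: nth_list_update)
  have c: "1 \<le> Suc i \<and> Suc i \<le> n" using assms by simp
  have p: "is_partition n (S mu j (Suc i))" by (rule S_part[OF assms(1)])
  show ?thesis unfolding act_letter_def Let_def eq using c p by (simp only: if_True simp_thms)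
qed


lemma col_fwd:
  assumes "is_partition n mu" "i \<le> col_len mu j"
  shows "act_word n [1..<Suc i] (P mu (Suc j)) = Some (S mu j i)"
  using assms(2)
proof (induction i)
  case 0 then show ?case by (simp add: S0)
next
  case (Suc i)
  have "i < n" using Suc.prems col_len_le[of mu j] assms(1) unfolding is_partition_def by simp
  then show ?case using Suc S_step[OF assms(1)] by (simp add: act_word_snoc)
qed

lemma rw_Cons: "reading_word (x # xs) = reading_word xs @ x"
  unfolding reading_word_def by simp

lemma rw_drop: "j < length T \<Longrightarrow> reading_word (drop j T) = reading_word (drop (Suc j) T) @ T ! j"
  by (simp add: Cons_nth_drop_Suc[symmetric] rw_Cons)

lemma rw_split: "reading_word T = reading_word (drop j T) @ reading_word (take j T)"
proof -
  have "reading_word (take j T @ drop j T) = reading_word (drop j T) @ reading_word (take j T)"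
    unfolding reading_word_def by (simp only: rev_append concat_append)
  then show ?thesis by (metis append_take_drop_id)
qed

lemma P_top:
  assumes "is_partition n mu" "mu \<noteq> []"
  shows "P mu (hd mu) = empty_part n"
proof -
  have "mu ! r \<le> hd mu" if "r < length mu" for r
  proof (cases r)
    case 0 then show ?thesis using assms by (simp add: hd_conv_nth)
  next
    case (Suc r') then show ?thesis using assms that unfolding is_partition_def
      by (auto simp: hd_conv_nth sorted_wrt_iff_nth_less)
  qed
  then show ?thesis using assms unfolding P_def empty_part_def is_partition_def
    by (intro nth_equalityI) auto
qed

lemma P_zero: "P mu 0 = mu" unfolding P_def by simp

lemma T_mu_len: "mu \<noteq> [] \<Longrightarrow> length (T_mu mu) = hd mu"
  unfolding T_mu_def by simp

lemma T_mu_nth: "mu \<noteq> [] \<Longrightarrow> j < hd mu \<Longrightarrow> T_mu mu ! j = [1..<Suc (col_len mu j)]"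
  unfolding T_mu_def by simp

lemma fwd_all:
  assumes "is_partition n mu" "mu \<noteq> []"
  shows "k \<le> hd mu \<Longrightarrow> act_word n (reading_word (drop (hd mu - k) (T_mu mu))) (empty_part n) = Some (P mu (hd mu - k))"
proof (induction k)
  case 0
  then show ?case using P_top[OF assms] T_mu_len[OF assms(2)] by (simp add: reading_word_def)
next
  case (Suc k)
  define j where "j = hd mu - Suc k"
  have j: "j < hd mu" "Suc j = hd mu - k" "hd mu - Suc k = j" using Suc.prems unfolding j_def by auto
  have "act_word n (reading_word (drop j (T_mu mu))) (empty_part n)
      = Option.bind (Some (P mu (Suc j))) (act_word n [1..<Suc (col_len mu j)])"
    using Suc j T_mu_len[OF assms(2)] T_mu_nth[OF assms(2) j(1)]
    by (simp add: rw_drop act_word_append)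
  also have "\<dots> = Some (P mu j)"
    using col_fwd[OF assms(1) le_refl, of j] Sc[of mu j] assms(1) unfolding is_partition_def by simp
  finally show ?case using j by simp
qed

lemma act_T_mu:
  assumes "is_partition n mu" "mu \<noteq> []"
  shows "act n (T_mu mu) (empty_part n) = Some mu"
  using fwd_all[OF assms, of "hd mu"] unfolding act_def by (simp add: P_zero)


lemma pos_nth:
  assumes "distinct x" "i < length x"
  shows "pos x (x ! i) = Suc i"
proof -
  have "(LEAST i'. i' < length x \<and> x ! i' = x ! i) = i"
  proof (rule Least_equality)
    show "i < length x \<and> x ! i = x ! i" using assms by simp
    fix y assume "y < length x \<and> x ! y = x ! i"
    then have "y = i" using assms nth_eq_iff_index_eq by blast
    then show "i \<le> y" by simp
  qed
  then show ?thesis unfolding pos_def by simp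
qed

lemma S_zero:
  assumes "is_partition n mu" "col_len mu (Suc j) \<le> r" "r < n"
  shows "mu ! r - Suc j = 0"
proof -
  have "sorted_wrt (\<ge>) mu" "r < length mu" using assms unfolding is_partition_def by auto
  then show ?thesis using col_len_iff[of mu r "Suc j"] assms(2) by simp
qed

lemma S_nth: "r < length mu \<Longrightarrow> S mu j i ! r = mu ! r - Suc j + (if r < i then 1 else 0)"
  unfolding S_def by simp

lemma bwd_col:
  assumes mu: "is_partition n mu"
    and srt: "sorted_wrt (<) x" and len: "length x = col_len mu j"
    and lt: "\<forall>y\<in>set x. is_letter n y" and c1: "C1 n x"
    and row: "\<forall>i < col_len mu (Suc j). x ! i \<le> Suc i"
    and df: "act_word n x (P mu (Suc j)) \<noteq> None"
  shows "x = [1..<Suc (col_len mu j)]"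
proof -
  define c where "c = col_len mu j"
  define c' where "c' = col_len mu (Suc j)"
  have ln: "length mu = n" using mu unfolding is_partition_def by simp
  have cn: "c \<le> n" unfolding c_def using col_len_le[of mu j] ln by simp
  have dist: "distinct x" using srt by (simp add: strict_sorted_iff)
  have "i \<le> c \<Longrightarrow> take i x = [1..<Suc i]" for i
  proof (induction i)
    case 0 then show ?case by simp
  next
    case (Suc i)
    have ic: "i < c" using Suc.prems by simp
    have tk: "take i x = [1..<Suc i]" using Suc by simp
    define y where "y = x ! i"
    have ix: "i < length x" using ic len c_def by simp
    have tS: "take (Suc i) x = take i x @ [y]" unfolding y_def using ix by (simp add: take_Suc_conv_app_nth)
    have "act_word n (take (Suc i) x @ drop (Suc i) x) (P mu (Suc j)) \<noteq> None" using df by simp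
    then have "act_word n (take (Suc i) x) (P mu (Suc j)) \<noteq> None" by (rule act_word_prefix)
    moreover have "act_word n (take i x) (P mu (Suc j)) = Some (S mu j i)"
      using tk col_fwd[OF mu, of i j] ic c_def by simp
    ultimately have ad: "act_letter n y (S mu j i) \<noteq> None" using tS by (simp add: act_word_snoc)
    have yl: "1 \<le> y" "y \<le> 2 * n" using lt ix unfolding y_def is_letter_def by auto
    have nth_tk: "x ! r = Suc r" if "r < i" for r
    proof -
      have "x ! r = take i x ! r" using that by simp
      also have "\<dots> = Suc r" using tk that by (simp del: upt_Suc)
      finally show ?thesis .
    qed
    have yge: "Suc i \<le> y"
    proof (cases i)
      case 0 then show ?thesis using yl by simp
    next
      case (Suc i')
      have "x ! i' < x ! i" using srt ix Suc by (simp add: sorted_wrt_iff_nth_less)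
      then show ?thesis using nth_tk[of i'] Suc unfolding y_def by simp
    qed
    have "y = Suc i"
    proof (rule ccontr)
      assume ne: "y \<noteq> Suc i"
      then have yg: "Suc i < y" using yge by simp
      show False
      proof (cases "i < c'")
        case True
        then have "x ! i \<le> Suc i" using row unfolding c'_def by simp
        then show False using yg unfolding y_def by simp
      next
        case False
        then have zero: "S mu j i ! r = 0" if "i \<le> r" "r < n" for r
          using S_zero[OF mu, of j r] that S_nth[of r mu j i] ln unfolding c'_def by simp
        show False
        proof (cases "y \<le> n")
          case True
          define lam' where "lam' = (S mu j i)[y - 1 := S mu j i ! (y - 1) + 1]"
          have "act_letter n y (S mu j i) = (if is_partition n lam' then Some lam' else None)"
            unfolding act_letter_def lam'_def using True yl by (simp add: Let_def)
          then have p: "is_partition n lam'" using ad by (auto split: if_splits)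
          have lS: "length (S mu j i) = n" unfolding S_def using ln by simp
          have a1: "lam' ! (y - 1) = 1" unfolding lam'_def using zero[of "y-1"] yg True lS by simp
          have a2: "lam' ! (y - 2) = 0" unfolding lam'_def using zero[of "y-2"] yg True lS by simp
          have "lam' ! (y - 1) \<le> lam' ! (y - 2)"
            using p yg True lS sorted_wrt_nth_less[of "(\<ge>)" lam' "y-2" "y-1"] unfolding is_partition_def lam'_def by simp
          then show False using a1 a2 by simp
        next
          case False
          define k where "k = bar n y"
          have kb: "1 \<le> k" "k \<le> n" "bar n k = y" using False yl unfolding k_def bar_def by auto
          have "S mu j i ! (k - 1) = 0 \<Longrightarrow> act_letter n y (S mu j i) = None"
            unfolding act_letter_def Let_def using False yl k_def by simp
          then have nz: "S mu j i ! (k - 1) \<noteq> 0" using ad by blast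
          have ki: "k \<le> i"
          proof (rule ccontr)
            assume "\<not> k \<le> i"
            then show False using zero[of "k-1"] nz kb by simp
          qed
          have xk: "x ! (k - 1) = k" using nth_tk[of "k-1"] ki kb by simp
          have kin: "k \<in> set x" using xk ki ix kb using nth_mem[of "k-1" x] by simp
          have yin: "bar n k \<in> set x" using kb ix unfolding y_def by simp
          have pk: "pos x k = k" using pos_nth[OF dist, of "k-1"] xk ki ix kb by simp
          have py: "pos x (bar n k) = Suc i" using pos_nth[OF dist ix] kb unfolding y_def by simp
          have "int (pos x k) + (int (length x) + 1 - int (pos x (bar n k))) \<le> int k"
            using c1 kb kin yin unfolding C1_def by blast
          then show False using pk py len ic unfolding c_def by simp
        qed
      qed
    qed
    then show ?case using tS tk by simp
  qed
  then have "take c x = [1..<Suc c]" by simp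
  then show ?thesis using len unfolding c_def by simp
qed


lemma bwd_all:
  assumes mu: "is_partition n mu" and ne: "mu \<noteq> []"
    and J: "semistandard_C n mu J" and d: "act n J (empty_part n) \<noteq> None"
  shows "k \<le> hd mu \<Longrightarrow> drop (hd mu - k) J = drop (hd mu - k) (T_mu mu)"
proof (induction k)
  have lJ: "length J = hd mu" using J ne unfolding semistandard_C_def semistandard_def is_tableau_of_shape_def by simp
  have lT: "length (T_mu mu) = hd mu" by (rule T_mu_len[OF ne])
  {
  case 0
  then show ?case using lJ lT by simp
  next
  case (Suc k)
  define j where "j = hd mu - Suc k"
  have j: "j < hd mu" "Suc j = hd mu - k" "hd mu - Suc k = j" using Suc.prems unfolding j_def by auto
  have IH: "drop (Suc j) J = drop (Suc j) (T_mu mu)" using Suc j by simp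
  have ss: "sorted_wrt (\<ge>) mu" and ln: "length mu = n" using mu unfolding is_partition_def by auto
  define x where "x = J ! j"
  have xin: "x \<in> set J" using j lJ unfolding x_def by simp
  have srt: "sorted_wrt (<) x" using J xin unfolding semistandard_C_def semistandard_def by blast
  have len: "length x = col_len mu j" using J j lJ unfolding x_def semistandard_C_def semistandard_def is_tableau_of_shape_def by simp
  have lt: "\<forall>y\<in>set x. is_letter n y" using J xin unfolding semistandard_C_def semistandard_def is_tableau_of_shape_def by blast
  have c1: "C1 n x" using J xin unfolding semistandard_C_def by blast
  have row: "\<forall>i < col_len mu (Suc j). x ! i \<le> Suc i"
  proof (intro allI impI)
    fix i assume i: "i < col_len mu (Suc j)"
    have "0 < col_len mu (Suc j)" using i by simp
    then have sj: "Suc j < hd mu" using col_len_iff[OF ss, of 0 "Suc j"] ne by (simp add: hd_conv_nth)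
    have JS: "J ! Suc j = [1..<Suc (col_len mu (Suc j))]"
    proof -
      have "J ! Suc j = drop (Suc j) J ! 0" using sj lJ by simp
      also have "\<dots> = drop (Suc j) (T_mu mu) ! 0" using IH by simp
      also have "\<dots> = T_mu mu ! Suc j" using sj lT by simp
      finally show ?thesis using T_mu_nth[OF ne sj] by simp
    qed
    have "J ! j ! i \<le> J ! Suc j ! i"
    proof -
      have "\<forall>j i. Suc j < length J \<and> i < length (J ! Suc j) \<longrightarrow> J ! j ! i \<le> J ! Suc j ! i"
        using J unfolding semistandard_C_def semistandard_def by blast
      moreover have "i < length (J ! Suc j)" using JS i by (simp del: upt_Suc)
      ultimately show ?thesis using sj lJ by metis
    qed
    then show "x ! i \<le> Suc i" using JS i unfolding x_def by (simp del: upt_Suc)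
  qed
  have "act_word n (reading_word (drop j J) @ reading_word (take j J)) (empty_part n) \<noteq> None"
    using d unfolding act_def by (metis rw_split)
  then have "act_word n (reading_word (drop j J)) (empty_part n) \<noteq> None" by (rule act_word_prefix)
  then have "act_word n (reading_word (drop (Suc j) J) @ x) (empty_part n) \<noteq> None"
    using rw_drop[of j J] j lJ unfolding x_def by simp
  moreover have "act_word n (reading_word (drop (Suc j) J)) (empty_part n) = Some (P mu (Suc j))"
    using IH fwd_all[OF mu ne, of k] j Suc.prems by simp
  ultimately have df: "act_word n x (P mu (Suc j)) \<noteq> None" by (simp add: act_word_append)
  have xeq: "J ! j = T_mu mu ! j"
    using bwd_col[OF mu srt len lt c1 row df] T_mu_nth[OF ne j(1)] unfolding x_def by simp
  have "drop j J = J ! j # drop (Suc j) J" using j(1) lJ by (simp add: Cons_nth_drop_Suc)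
  also have "\<dots> = T_mu mu ! j # drop (Suc j) (T_mu mu)" using xeq IH by simp
  also have "\<dots> = drop j (T_mu mu)" using j(1) lT by (simp add: Cons_nth_drop_Suc)
  finally show ?case using j by simp
  }
qed


lemma T_mu_letters:
  assumes mu: "is_partition n mu" and ne: "mu \<noteq> []" and C: "C \<in> set (T_mu mu)" and y: "y \<in> set C"
  shows "1 \<le> y \<and> y \<le> n"
proof -
  obtain j where "C = [1..<Suc (col_len mu j)]" using C unfolding T_mu_def by (auto simp del: upt_Suc)
  then have "1 \<le> y" "y \<le> col_len mu j" using y by auto
  moreover have "col_len mu j \<le> n" using col_len_le[of mu j] mu unfolding is_partition_def by simp
  ultimately show ?thesis by simp
qed

lemma bar_big: "1 \<le> k \<Longrightarrow> k \<le> n \<Longrightarrow> n < bar n k"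
  unfolding bar_def by simp

lemma ssC:
  assumes mu: "is_partition n mu" and ne: "mu \<noteq> []"
  shows "semistandard_C n mu (T_mu mu)"
proof -
  have ss: "sorted_wrt (\<ge>) mu" using mu unfolding is_partition_def by simp
  have lt: "\<forall>C\<in>set (T_mu mu). \<forall>y\<in>set C. 1 \<le> y \<and> y \<le> n"
    using T_mu_letters[OF mu ne] by blast
  have shape: "is_tableau_of_shape n mu (T_mu mu)"
  proof -
    have "\<forall>C\<in>set (T_mu mu). \<forall>y\<in>set C. is_letter n y"
    proof (intro ballI)
      fix C y assume "C \<in> set (T_mu mu)" "y \<in> set C"
      then have "1 \<le> y \<and> y \<le> n" using lt by blast
      then show "is_letter n y" unfolding is_letter_def by simp
    qed
    moreover have "\<forall>j < length (T_mu mu). length (T_mu mu ! j) = col_len mu j"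
      using T_mu_len[OF ne] T_mu_nth[OF ne] by (simp del: upt_Suc)
    ultimately show ?thesis unfolding is_tableau_of_shape_def using ne T_mu_len[OF ne] by simp
  qed
  have srt: "\<forall>C\<in>set (T_mu mu). sorted_wrt (<) C" unfolding T_mu_def by (auto simp del: upt_Suc)
  have row: "\<forall>j i. Suc j < length (T_mu mu) \<and> i < length (T_mu mu ! Suc j) \<longrightarrow> T_mu mu ! j ! i \<le> T_mu mu ! Suc j ! i"
  proof (intro allI impI)
    fix j i assume a: "Suc j < length (T_mu mu) \<and> i < length (T_mu mu ! Suc j)"
    then have sj: "Suc j < hd mu" using T_mu_len[OF ne] by simp
    then have i: "i < col_len mu (Suc j)" using a T_mu_nth[OF ne sj] by (simp del: upt_Suc)
    have "i < col_len mu j" using i col_len_mono[OF ss, of j] by simp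
    then show "T_mu mu ! j ! i \<le> T_mu mu ! Suc j ! i"
      using i T_mu_nth[OF ne sj] T_mu_nth[OF ne, of j] sj by (simp del: upt_Suc)
  qed
  have c1: "\<forall>C\<in>set (T_mu mu). C1 n C"
  proof (intro ballI)
    fix C assume C: "C \<in> set (T_mu mu)"
    show "C1 n C" unfolding C1_def
    proof (intro allI impI)
      fix k assume a: "1 \<le> k \<and> k \<le> n \<and> k \<in> set C \<and> bar n k \<in> set C"
      then have "bar n k \<le> n" using lt C by blast
      moreover have "n < bar n k" using a bar_big by blast
      ultimately show "int (pos C k) + (int (length C) + 1 - int (pos C (bar n k))) \<le> int k" by simp
    qed
  qed
  have c2: "\<forall>j. Suc j < length (T_mu mu) \<longrightarrow> C2 n (T_mu mu ! j) (T_mu mu ! Suc j)"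
  proof (intro allI impI)
    fix j assume "Suc j < length (T_mu mu)"
    then have "T_mu mu ! Suc j \<in> set (T_mu mu)" by simp
    then show "C2 n (T_mu mu ! j) (T_mu mu ! Suc j)"
    proof -
      have nb: "bar n a \<notin> set (T_mu mu ! Suc j)" if "1 \<le> a" "a \<le> n" for a
      proof
        assume "bar n a \<in> set (T_mu mu ! Suc j)"
        then have "bar n a \<le> n" using lt \<open>T_mu mu ! Suc j \<in> set (T_mu mu)\<close> by blast
        moreover have "n < bar n a" using that bar_big by simp
        ultimately show "False" by simp
      qed
      show ?thesis unfolding C2_def using nb by (meson order_trans)
    qed
  qed
  show ?thesis unfolding semistandard_C_def semistandard_def using shape srt row c1 c2 by blast
qed

lemma act_letter_unbarred:
  assumes "1 \<le> y" "y \<le> n" "act_letter n y lam = Some nu"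
  shows "nu = lam[y - 1 := lam ! (y - 1) + 1] \<and> is_partition n nu"
  using assms unfolding act_letter_def Let_def by (auto split: if_splits)


theorem proposition3p3:
  fixes n :: nat and mu :: "nat list"
  assumes "1 \<le> n" and "is_partition n mu"
  shows "semistandard_C n mu (T_mu mu)
    \<and> act n (T_mu mu) (empty_part n) = Some mu
    \<and> (\<forall>J lam. semistandard_C n mu J \<and> act n J (empty_part n) = Some lam
          \<longrightarrow> lam = mu \<and> J = T_mu mu)
    \<and> (mu \<noteq> empty_part n \<longrightarrow>
          (\<forall>k. 1 \<le> k \<and> k \<le> length (reading_word (T_mu mu)) \<longrightarrow>
             (\<exists>nu. act_word n (take k (reading_word (T_mu mu))) (empty_part n) = Some nu
                   \<and> nu \<noteq> empty_part n)))"
proof -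
  have mu: "is_partition n mu" by (rule assms(2))
  have ne: "mu \<noteq> []" using assms unfolding is_partition_def by auto
  have A: "act n (T_mu mu) (empty_part n) = Some mu" by (rule act_T_mu[OF mu ne])
  have C: "\<forall>J lam. semistandard_C n mu J \<and> act n J (empty_part n) = Some lam
          \<longrightarrow> lam = mu \<and> J = T_mu mu"
  proof (intro allI impI)
    fix J lam assume a: "semistandard_C n mu J \<and> act n J (empty_part n) = Some lam"
    then have "drop (hd mu - hd mu) J = drop (hd mu - hd mu) (T_mu mu)"
      using bwd_all[OF mu ne, of J "hd mu"] by simp
    then have JT: "J = T_mu mu" by simp
    then show "lam = mu \<and> J = T_mu mu" using a A by simp
  qed
  have D: "\<forall>k. 1 \<le> k \<and> k \<le> length (reading_word (T_mu mu)) \<longrightarrow>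
             (\<exists>nu. act_word n (take k (reading_word (T_mu mu))) (empty_part n) = Some nu
                   \<and> nu \<noteq> empty_part n)"
  proof (intro allI impI)
    fix k
    define w where "w = reading_word (T_mu mu)"
    assume "1 \<le> k \<and> k \<le> length (reading_word (T_mu mu))"
    then have k: "1 \<le> k" "k \<le> length w" unfolding w_def by auto
    have full: "act_word n w (empty_part n) = Some mu" using A unfolding act_def w_def by simp
    have tk: "take k w = take (k - 1) w @ [w ! (k - 1)]"
      using k take_Suc_conv_app_nth[of "k-1" w] by simp
    have "act_word n (take k w @ drop k w) (empty_part n) \<noteq> None" using full by simp
    then have d1: "act_word n (take k w) (empty_part n) \<noteq> None" by (rule act_word_prefix)
    then obtain nu where nu: "act_word n (take k w) (empty_part n) = Some nu" by auto
    have "act_word n (take (k - 1) w) (empty_part n) \<noteq> None"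
      using d1 tk act_word_prefix by metis
    then obtain nu0 where nu0: "act_word n (take (k - 1) w) (empty_part n) = Some nu0" by auto
    define y where "y = w ! (k - 1)"
    have al: "act_letter n y nu0 = Some nu" using nu nu0 tk unfolding y_def by (simp add: act_word_snoc)
    have "y \<in> set w" unfolding y_def using k by simp
    then obtain Cc where "Cc \<in> set (T_mu mu)" "y \<in> set Cc" unfolding w_def reading_word_def by auto
    then have yl: "1 \<le> y \<and> y \<le> n" using T_mu_letters[OF mu ne] by blast
    then have u: "nu = nu0[y - 1 := nu0 ! (y - 1) + 1]" "is_partition n nu"
      using act_letter_unbarred[OF _ _ al] by auto
    have "length nu0 = n" using u unfolding is_partition_def by simp
    then have yi: "y - 1 < length nu0" using yl by arith
    have "nu ! (y - 1) = nu0 ! (y - 1) + 1" using u(1) nth_list_update_eq[OF yi] by simp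
    then have "nu ! (y - 1) \<noteq> 0" by simp
    moreover have "empty_part n ! (y - 1) = 0"
    proof -
      have "y - 1 < n" using yl by arith
      then show ?thesis unfolding empty_part_def by simp
    qed
    ultimately have "nu \<noteq> empty_part n" by metis
    then show "\<exists>nu. act_word n (take k (reading_word (T_mu mu))) (empty_part n) = Some nu
                   \<and> nu \<noteq> empty_part n" using nu unfolding w_def by blast
  qed
  show ?thesis using ssC[OF mu ne] A C D by blast
qed

end
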